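(* Let $\alpha: I\subset\mathbb{R}\to\mathbb{R}^3_1$ be a semi-real spatial quaternionic curve, parametrized by pseudo arc length $s$, with a spacelike or timelike rectifying plane, curvature $k(s)>0$ and torsion $r(s)$. Then $\alpha$ is (congruent to) a semi-real spatial quaternionic rectifying curve if and only if $\frac{r(s)}{k(s)}=c_1 s+c_2$ for some $c_1,c_2\in\mathbb{R}$ with $c_1\neq 0$.
   Context: $\mathbb{R}^3_1$ is the semi-Euclidean (Minkowski) 3-space, identified with the space of semi-real spatial quaternions $q=q_1\mathbf{e}_1+q_2\mathbf{e}_2+q_3\mathbf{e}_3$, with inner product $h(p,q)=p_1q_1+p_2q_2-p_3q_3$. Pseudo arc length $s$ means $|h(\alpha',\alpha')|=1$. The non-null Frenet frame $\{\mathbf{t},\mathbf{n}_1,\mathbf{n}_2\}$ with $h(\mathbf{t},\mathbf{t})=\varepsilon_t$, $h(\mathbf{n}_1,\mathbf{n}_1)=\varepsilon_{n_1}$, $h(\mathbf{n}_2,\mathbf{n}_2)=\varepsilon_{n_2}$ ($\varepsilon\in\{\pm1\}$) satisfies $\mathbf{t}'=\varepsilon_{n_1}k\mathbf{n}_1$, $\mathbf{n}_1'=-\varepsilon_t k\mathbf{t}+\varepsilon_{n_1}r\mathbf{n}_2$, $\mathbf{n}_2'=-\varepsilon_{n_2}r\mathbf{n}_1$. The rectifying plane is the plane spanned by $\mathbf{t}$ and $\mathbf{n}_2$. A rectifying curve is one with $\alpha(s)=\lambda(s)\mathbf{t}(s)+\mu(s)\mathbf{n}_2(s)$ for some differentiable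 functions $\lambda,\mu$; congruent means equal up to a rigid motion (here a translation) of $\mathbb{R}^3_1$. *)

theory Defs
  imports "HOL-Analysis.Analysis"
begin

text \<open>Semi-real spatial quaternions q = q1 e1 + q2 e2 + q3 e3 identified with real^3,
  with the semi-Euclidean inner product h(p,q) = p1 q1 + p2 q2 - p3 q3 of R^3_1.\<close>

definition h :: "real^3 \<Rightarrow> real^3 \<Rightarrow> real" where
  "h p q = p$1 * q$1 + p$2 * q$2 - p$3 * q$3"

definition sign_unit :: "real \<Rightarrow> bool" where
  "sign_unit e \<longleftrightarrow> e = 1 \<or> e = -1"

definition frenet_curve ::
  "real set \<Rightarrow> (real \<Rightarrow> real^3) \<Rightarrow> (real \<Rightarrow> real^3) \<Rightarrow> (real \<Rightarrow> real^3) \<Rightarrow> (real \<Rightarrow> real^3)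
   \<Rightarrow> (real \<Rightarrow> real) \<Rightarrow> (real \<Rightarrow> real) \<Rightarrow> real \<Rightarrow> real \<Rightarrow> real \<Rightarrow> bool" where
  "frenet_curve I \<alpha> t n1 n2 k r et en1 en2 \<longleftrightarrow>
     sign_unit et \<and> sign_unit en1 \<and> sign_unit en2 \<and>
     (\<forall>s\<in>I.
        (\<alpha> has_vector_derivative t s) (at s) \<and>
        \<bar>h (t s) (t s)\<bar> = 1 \<and>
        h (t s) (t s) = et \<and> h (n1 s) (n1 s) = en1 \<and> h (n2 s) (n2 s) = en2 \<and>
        h (t s) (n1 s) = 0 \<and> h (t s) (n2 s) = 0 \<and> h (n1 s) (n2 s) = 0 \<and>
        (t has_vector_derivative (en1 * k s) *\<^sub>R n1 s) (at s) \<and>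
        (n1 has_vector_derivative ((- et * k s) *\<^sub>R t s + (en1 * r s) *\<^sub>R n2 s)) (at s) \<and>
        (n2 has_vector_derivative ((- en2 * r s) *\<^sub>R n1 s)) (at s))"

text \<open>The rectifying plane span{t, n2} is spacelike or timelike (non-degenerate).\<close>
definition rectifying_plane_nondegenerate ::
  "real set \<Rightarrow> (real \<Rightarrow> real^3) \<Rightarrow> (real \<Rightarrow> real^3) \<Rightarrow> bool" where
  "rectifying_plane_nondegenerate I t n2 \<longleftrightarrow>
     (\<forall>s\<in>I. h (t s) (t s) * h (n2 s) (n2 s) - (h (t s) (n2 s))^2 \<noteq> 0)"

definition rectifying_curve ::
  "real set \<Rightarrow> (real \<Rightarrow> real^3) \<Rightarrow> (real \<Rightarrow> real^3) \<Rightarrow> (real \<Rightarrow> real^3) \<Rightarrow> bool" where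
  "rectifying_curve I \<alpha> t n2 \<longleftrightarrow>
     (\<exists>la mu :: real \<Rightarrow> real.
        (\<forall>s\<in>I. la differentiable (at s) \<and> mu differentiable (at s)) \<and>
        (\<forall>s\<in>I. \<alpha> s = la s *\<^sub>R t s + mu s *\<^sub>R n2 s))"

end

theory Submission
  imports Defs
begin

lemma h_add_l: "h (a + b) q = h a q + h b q" by (simp add: h_def algebra_simps)
lemma h_diff_l: "h (a - b) q = h a q - h b q" by (simp add: h_def algebra_simps)
lemma h_scale_l: "h (x *\<^sub>R a) q = x * h a q" by (simp add: h_def algebra_simps)
lemma h_zero_l: "h 0 q = 0" by (simp add: h_def)
lemma h_sym: "h p q = h q p" by (simp add: h_def algebra_simps)

lemma sign_sq: "sign_unit e \<Longrightarrow> e * e = 1" "sign_unit e \<Longrightarrow> e \<noteq> 0"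
  by (auto simp: sign_unit_def)

theorem theorem3p3:
  fixes I :: "real set" and \<alpha> t n1 n2 :: "real \<Rightarrow> real^3"
    and k r :: "real \<Rightarrow> real" and et en1 en2 :: real
  assumes "is_interval I" and "open I" and "I \<noteq> {}"
    and "frenet_curve I \<alpha> t n1 n2 k r et en1 en2"
    and "rectifying_plane_nondegenerate I t n2"
    and "\<forall>s\<in>I. k s > 0"
  shows "(\<exists>c :: real^3. rectifying_curve I (\<lambda>s. \<alpha> s + c) t n2) \<longleftrightarrow>
         (\<exists>c1 c2 :: real. c1 \<noteq> 0 \<and> (\<forall>s\<in>I. r s / k s = c1 * s + c2))"
proof -
  note F = assms(4)[unfolded frenet_curve_def]
  have su: "sign_unit et" "sign_unit en1" "sign_unit en2" using F by auto
  have cvx: "convex I" using assms(1) by (rule is_interval_convex)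
  have kpos: "\<And>s. s \<in> I \<Longrightarrow> k s > 0" using assms(6) by auto
  show ?thesis
  proof
    assume "\<exists>c. rectifying_curve I (\<lambda>s. \<alpha> s + c) t n2"
    then obtain c la mu where dif: "\<forall>s\<in>I. la differentiable (at s) \<and> mu differentiable (at s)"
      and eq: "\<forall>s\<in>I. \<alpha> s + c = la s *\<^sub>R t s + mu s *\<^sub>R n2 s"
      unfolding rectifying_curve_def by blast
    have key: "deriv la s = 1 \<and> deriv mu s = 0 \<and> la s * k s = mu s * en1 * en2 * r s" if s: "s \<in> I" for s
    proof -
      have dla: "(la has_field_derivative deriv la s) (at s)"
        using dif s by (simp add: DERIV_deriv_iff_real_differentiable)
      have dmu: "(mu has_field_derivative deriv mu s) (at s)"
        using dif s by (simp add: DERIV_deriv_iff_real_differentiable)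
      have D1: "((\<lambda>s. la s *\<^sub>R t s + mu s *\<^sub>R n2 s) has_vector_derivative
          (la s *\<^sub>R ((en1 * k s) *\<^sub>R n1 s) + deriv la s *\<^sub>R t s) +
          (mu s *\<^sub>R ((- en2 * r s) *\<^sub>R n1 s) + deriv mu s *\<^sub>R n2 s)) (at s)"
        using F s by (intro has_vector_derivative_add has_vector_derivative_scaleR dla dmu) auto
      have "((\<lambda>s. \<alpha> s + c) has_vector_derivative t s) (at s)"
        using F s by (auto intro!: derivative_eq_intros)
      then have D2: "((\<lambda>s. la s *\<^sub>R t s + mu s *\<^sub>R n2 s) has_vector_derivative t s) (at s)"
        by (rule has_vector_derivative_transform_within_open[OF _ assms(2) s]) (use eq in auto)
      have V: "t s = (la s *\<^sub>R ((en1 * k s) *\<^sub>R n1 s) + deriv la s *\<^sub>R t s) +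
          (mu s *\<^sub>R ((- en2 * r s) *\<^sub>R n1 s) + deriv mu s *\<^sub>R n2 s)"
        using vector_derivative_unique_at[OF D2 D1] .
      have o: "h (t s) (t s) = et" "h (n1 s) (n1 s) = en1" "h (n2 s) (n2 s) = en2"
        "h (t s) (n1 s) = 0" "h (t s) (n2 s) = 0" "h (n1 s) (n2 s) = 0"
        "h (n1 s) (t s) = 0" "h (n2 s) (t s) = 0" "h (n2 s) (n1 s) = 0"
        using F s by (auto simp: h_sym)
      have "h (t s) (t s) = h (rhs) (t s)" if "t s = rhs" for rhs using that by simp
      from arg_cong[OF V, of "\<lambda>v. h v (t s)"] have e1: "et = deriv la s * et"
        by (simp only: h_add_l h_scale_l o; simp)
      from arg_cong[OF V, of "\<lambda>v. h v (n2 s)"] have e2: "0 = deriv mu s * en2"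
        by (simp only: h_add_l h_scale_l o; simp)
      from arg_cong[OF V, of "\<lambda>v. h v (n1 s)"] have e3: "0 = la s * (en1 * k s * en1) + mu s * (- en2 * r s * en1)"
        by (simp only: h_add_l h_scale_l o; simp)
      have "deriv la s = 1" using e1 sign_sq(2)[OF su(1)] by simp
      moreover have "deriv mu s = 0" using e2 sign_sq(2)[OF su(3)] by simp
      moreover have "la s * k s = mu s * en1 * en2 * r s"
      proof -
        have "la s * (en1 * en1) * k s = mu s * en2 * r s * en1" using e3 by algebra
        then have "la s * k s = mu s * en2 * r s * en1" using sign_sq(1)[OF su(2)] by simp
        then show ?thesis by (simp add: algebra_simps)
      qed
      ultimately show ?thesis by blast
    qed
    have dd: "(la has_field_derivative 1) (at x within I) \<and> (mu has_field_derivative 0) (at x within I)"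
      if x: "x \<in> I" for x
    proof -
      have "(la has_field_derivative deriv la x) (at x)" "(mu has_field_derivative deriv mu x) (at x)"
        using dif x by (simp_all add: DERIV_deriv_iff_real_differentiable)
      then show ?thesis using key[OF x] by (simp add: has_field_derivative_at_within)
    qed
    have "\<exists>b. \<forall>s\<in>I. mu s = b"
      by (rule has_field_derivative_zero_constant[OF cvx]) (use dd in blast)
    then obtain b where b: "\<And>s. s \<in> I \<Longrightarrow> mu s = b" by blast
    have "\<exists>a. \<forall>s\<in>I. la s - s = a"
    proof (rule has_field_derivative_zero_constant[OF cvx])
      fix x assume x: "x \<in> I"
      have "((\<lambda>s. la s - s) has_field_derivative 1 - 1) (at x within I)"
        using dd[OF x] by (intro DERIV_diff) (auto intro: DERIV_ident)
      then show "((\<lambda>s. la s - s) has_field_derivative 0) (at x within I)" by simp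
    qed
    then obtain a where a: "\<And>s. s \<in> I \<Longrightarrow> la s = s + a" by (metis add.commute diff_add_cancel)
    have rel: "(s + a) * k s = b * en1 * en2 * r s" if "s \<in> I" for s
      using key[OF that] a[OF that] b[OF that] by simp
    obtain s0 where s0: "s0 \<in> I" using assms(3) by blast
    obtain e where e: "e > 0" "ball s0 e \<subseteq> I" using assms(2) s0 openE by blast
    have s1: "s0 + e/2 \<in> I" using e by (intro subsetD[OF e(2)]) (simp add: dist_real_def)
    have bnz: "b \<noteq> 0"
    proof
      assume "b = 0"
      then have "s0 + a = 0" "s0 + e/2 + a = 0"
        using rel[OF s0] rel[OF s1] kpos[OF s0] kpos[OF s1] by auto
      then show False using e by simp
    qed
    show "\<exists>c1 c2. c1 \<noteq> 0 \<and> (\<forall>s\<in>I. r s / k s = c1 * s + c2)"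
    proof (intro exI conjI ballI)
      show "en1 * en2 / b \<noteq> 0" using bnz sign_sq(2)[OF su(2)] sign_sq(2)[OF su(3)] by simp
      fix s assume s: "s \<in> I"
      have "en1 * en2 * ((s + a) * k s) = b * (en1 * en1) * (en2 * en2) * r s"
        using rel[OF s] by (simp add: algebra_simps)
      then have "en1 * en2 * ((s + a) * k s) = b * r s"
        using sign_sq(1)[OF su(2)] sign_sq(1)[OF su(3)] by simp
      then show "r s / k s = en1 * en2 / b * s + en1 * en2 * a / b"
        using bnz kpos[OF s] by (simp add: field_simps)
    qed
  next
    assume "\<exists>c1 c2. c1 \<noteq> 0 \<and> (\<forall>s\<in>I. r s / k s = c1 * s + c2)"
    then obtain c1 c2 where c1: "c1 \<noteq> 0" and rk: "\<forall>s\<in>I. r s / k s = c1 * s + c2" by blast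
    define mu where "mu = en1 * en2 / c1"
    define \<beta> where "\<beta> = (\<lambda>s. (s + c2 / c1) *\<^sub>R t s + mu *\<^sub>R n2 s - \<alpha> s)"
    have "(\<beta> has_vector_derivative 0) (at s within I)" if s: "s \<in> I" for s
    proof -
      have r: "r s = k s * (c1 * s + c2)" using rk s kpos[OF s]
        by (metis less_irrefl nonzero_mult_div_cancel_left times_divide_eq_right)
      have D: "(\<beta> has_vector_derivative
          ((s + c2 / c1) *\<^sub>R ((en1 * k s) *\<^sub>R n1 s) + 1 *\<^sub>R t s) +
          (mu *\<^sub>R ((- en2 * r s) *\<^sub>R n1 s) + 0 *\<^sub>R n2 s) - t s) (at s)"
        unfolding \<beta>_def using F s
        by (intro has_vector_derivative_add has_vector_derivative_scaleR has_vector_derivative_diff)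
           (auto intro!: derivative_eq_intros)
      have coef: "(s + c2 / c1) * (en1 * k s) + mu * (- en2 * r s) = 0"
      proof -
        have e: "en2 * en2 = 1" using sign_sq(1)[OF su(3)] .
        have "(s + c2 / c1) * (en1 * k s) + en1 * en2 / c1 * (- en2 * (k s * (c1 * s + c2)))
            = (s + c2 / c1) * (en1 * k s) - (en2 * en2) * (en1 * k s * (s + c2 / c1))"
          using c1 by (simp add: field_simps)
        then show ?thesis unfolding mu_def r e by simp
      qed
      have "((s + c2 / c1) *\<^sub>R ((en1 * k s) *\<^sub>R n1 s) + 1 *\<^sub>R t s) +
          (mu *\<^sub>R ((- en2 * r s) *\<^sub>R n1 s) + 0 *\<^sub>R n2 s) - t s
          = ((s + c2 / c1) * (en1 * k s) + mu * (- en2 * r s)) *\<^sub>R n1 s"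
        by (simp add: algebra_simps)
      with coef D show ?thesis by (simp add: has_vector_derivative_at_within)
    qed
    then obtain c where c: "\<And>s. s \<in> I \<Longrightarrow> \<beta> s = c"
      using has_vector_derivative_zero_constant[OF cvx] by blast
    show "\<exists>c. rectifying_curve I (\<lambda>s. \<alpha> s + c) t n2"
      unfolding rectifying_curve_def
    proof (intro exI conjI ballI)
      fix s assume s: "s \<in> I"
      show "(\<lambda>s. s + c2 / c1) differentiable (at s)" by (intro derivative_intros)
      show "(\<lambda>s. mu) differentiable (at s)" by simp
      show "\<alpha> s + c = (s + c2 / c1) *\<^sub>R t s + mu *\<^sub>R n2 s"
        using c[OF s] unfolding \<beta>_def by (simp add: algebra_simps)
    qed
  qed
qed

end
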